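(* Let $\alpha\in(1,2]$ and let $\beta$ be given by $\frac1\alpha+\frac1\beta=1$. Let $W$ be a random variable with values in $[0,\infty)$ satisfying \[ \Pr(W\le t)=\int_0^t\frac{\Pr(W>t-v)}{v^{1/\alpha}}\,dv\qquad\forall t>0. \] Then \[ \mathbb E[e^{-sW}]=\frac{1}{1+c_\beta s^{1/\beta}}\qquad\forall s>0,\quad\text{where } c_\beta:=\Gamma\!\left(\tfrac1\beta\right)^{-1}. \] In particular, $W$ has the same distribution as $c_\beta^\beta\,\mathcal E^\beta\,\mathcal G_{1/\beta}$, where $\mathcal E$ and $\mathcal G_{1/\beta}$ are independent, $\Pr(\mathcal E>t)=e^{-t}$, and $\mathbb E[e^{-s\mathcal G_{1/\beta}}]=e^{-s^{1/\beta}}$ for $s>0$.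
   Context: $\Gamma(\cdot)$ is Euler's Gamma function. *)

theory Defs
  imports "HOL-Probability.Probability"
begin

end

theory Submission
  imports Defs
begin


lemma prob_int_abs_bound:
  fixes h :: "'a \<Rightarrow> real"
  assumes "prob_space P" "h \<in> borel_measurable P" "AE x in P. \<bar>h x\<bar> \<le> e"
  shows "\<bar>integral\<^sup>L P h\<bar> \<le> e"
proof -
  interpret prob_space P by fact
  have int: "integrable P h"
    using assms by (intro integrable_const_bound[of _ e]) auto
  have "\<bar>integral\<^sup>L P h\<bar> \<le> integral\<^sup>L P (\<lambda>x. \<bar>h x\<bar>)"
    using integral_norm_bound[of P h] by simp
  also have "\<dots> \<le> integral\<^sup>L P (\<lambda>x. e)"
    using assms int by (intro integral_mono_AE) auto
  also have "\<dots> = e" by (simp add: prob_space)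
  finally show ?thesis .
qed

lemma laplace_poly:
  assumes P: "real_distribution P" and Q: "real_distribution Q"
    and P0: "AE x in P. 0 \<le> x" and Q0: "AE x in Q. 0 \<le> x"
    and L: "\<And>n::nat. (\<integral>x. exp (- real n * x) \<partial>P) = (\<integral>x. exp (- real n * x) \<partial>Q)"
    and p: "real_polynomial_function p"
  shows "(\<integral>x. p (exp (- x)) \<partial>P) = (\<integral>x. p (exp (- x)) \<partial>Q)"
proof -
  obtain a n where pe: "p = (\<lambda>x. \<Sum>i\<le>n. a i * x^i)"
    using p real_polynomial_function_iff_sum by blast
  have ex: "exp (- x) ^ i = exp (- real i * x)" for x :: real and i
    by (metis exp_of_nat_mult mult_minus_left mult_minus_right)
  have intP: "integrable P (\<lambda>x. exp (- real i * x))" for i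
  proof -
    interpret real_distribution P by fact
    show ?thesis
      by (rule integrable_const_bound[of _ 1]) (use P0 in \<open>auto elim!: eventually_mono\<close>)
  qed
  have intQ: "integrable Q (\<lambda>x. exp (- real i * x))" for i
  proof -
    interpret real_distribution Q by fact
    show ?thesis
      by (rule integrable_const_bound[of _ 1]) (use Q0 in \<open>auto elim!: eventually_mono\<close>)
  qed
  have "(\<integral>x. (\<Sum>i\<le>n. a i * exp (- real i * x)) \<partial>R) = (\<Sum>i\<le>n. a i * (\<integral>x. exp (- real i * x) \<partial>R))"
    if "\<And>i. integrable R (\<lambda>x. exp (- real i * x))" for R :: "real measure"
    using that by (subst Bochner_Integration.integral_sum) (auto intro!: integrable_mult_right)
  from this[OF intP] this[OF intQ] show ?thesis
    unfolding pe ex using L by simp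
qed

lemma laplace_cont:
  fixes f :: "real \<Rightarrow> real"
  assumes P: "real_distribution P" and Q: "real_distribution Q"
    and P0: "AE x in P. 0 \<le> x" and Q0: "AE x in Q. 0 \<le> x"
    and L: "\<And>n::nat. (\<integral>x. exp (- real n * x) \<partial>P) = (\<integral>x. exp (- real n * x) \<partial>Q)"
    and f: "continuous_on UNIV f" and fb: "\<And>u. \<bar>f u\<bar> \<le> 1"
  shows "(\<integral>x. f (exp (- x)) \<partial>P) = (\<integral>x. f (exp (- x)) \<partial>Q)"
proof -
  have fm: "(\<lambda>x. f (exp (- x))) \<in> borel_measurable borel"
    by (intro borel_measurable_continuous_onI continuous_on_compose2[OF f]) (auto intro!: continuous_intros)
  have key: "\<bar>(\<integral>x. f (exp (- x)) \<partial>P) - (\<integral>x. f (exp (- x)) \<partial>Q)\<bar> \<le> 2 * e" if e: "e > 0" for e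
  proof -
    obtain g where g: "polynomial_function g" and ge: "\<forall>u\<in>{0..1}. norm (f u - g u) < e"
      using Stone_Weierstrass_polynomial_function[of "{0..1::real}" f e] e
        continuous_on_subset[OF f] by auto
    have gc: "continuous_on UNIV g" by (rule continuous_on_polymonial_function[OF g])
    have gm: "(\<lambda>x. g (exp (- x))) \<in> borel_measurable borel"
      by (intro borel_measurable_continuous_onI continuous_on_compose2[OF gc]) (auto intro!: continuous_intros)
    have dm: "(\<lambda>x. f (exp (- x)) - g (exp (- x))) \<in> borel_measurable borel"
      using fm gm by measurable
    have u01: "0 \<le> x \<Longrightarrow> exp (- x) \<in> {0..1}" for x :: real by auto
    have eqg: "(\<integral>x. g (exp (- x)) \<partial>P) = (\<integral>x. g (exp (- x)) \<partial>Q)"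
      by (rule laplace_poly[OF P Q P0 Q0 L]) (simp add: real_polynomial_function_eq g)
    have one: "\<bar>(\<integral>x. f (exp (- x)) \<partial>R) - (\<integral>x. g (exp (- x)) \<partial>R)\<bar> \<le> e"
      if R: "real_distribution R" and R0: "AE x in R. 0 \<le> x" for R
    proof -
      interpret real_distribution R by fact
      have bf: "AE x in R. \<bar>f (exp (- x))\<bar> \<le> 1" using fb by auto
      have bd: "AE x in R. \<bar>f (exp (- x)) - g (exp (- x))\<bar> \<le> e"
        using R0 by eventually_elim (use ge u01 in \<open>auto intro: less_imp_le\<close>)
      have i1: "integrable R (\<lambda>x. f (exp (- x)))"
        by (rule integrable_const_bound[of _ 1]) (use bf fm in auto)
      have i2: "integrable R (\<lambda>x. f (exp (- x)) - g (exp (- x)))"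
        by (rule integrable_const_bound[of _ e]) (use bd dm in auto)
      have i3: "integrable R (\<lambda>x. g (exp (- x)))"
        using Bochner_Integration.integrable_diff[OF i1 i2] by simp
      have "(\<integral>x. f (exp (- x)) \<partial>R) - (\<integral>x. g (exp (- x)) \<partial>R) = (\<integral>x. f (exp (- x)) - g (exp (- x)) \<partial>R)"
        using i1 i3 by simp
      also have "\<bar>\<dots>\<bar> \<le> e"
        by (rule prob_int_abs_bound) (use bd dm prob_space_axioms in auto)
      finally show ?thesis .
    qed
    show ?thesis using one[OF P P0] one[OF Q Q0] eqg by linarith
  qed
  show ?thesis
  proof (rule ccontr)
    let ?d = "\<bar>(\<integral>x. f (exp (- x)) \<partial>P) - (\<integral>x. f (exp (- x)) \<partial>Q)\<bar>"
    assume "\<not> ?thesis"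
    hence "?d > 0" by simp
    from key[of "?d / 4"] this show False by simp
  qed
qed

lemma laplace_cdf_le:
  assumes P: "real_distribution P" and Q: "real_distribution Q"
    and P0: "AE x in P. 0 \<le> x" and Q0: "AE x in Q. 0 \<le> x"
    and L: "\<And>n::nat. (\<integral>x. exp (- real n * x) \<partial>P) = (\<integral>x. exp (- real n * x) \<partial>Q)"
    and ab: "a < b"
  shows "cdf P a \<le> cdf Q b"
proof -
  define c where "c = - exp (- a)"
  define d where "d = - exp (- b)"
  have cd: "c < d" using ab by (simp add: c_def d_def)
  have me: "- exp (- x) < - exp (- y)" if "x < y" for x y :: real using that by simp
  have me2: "- exp (- b) < - exp (- x)" if "\<not> x \<le> b" for x :: real using that by simp
  define f where "f = (\<lambda>u. cts_step c d (- u))"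
  have fc: "continuous_on UNIV f"
    unfolding f_def
    by (intro continuous_on_compose2[OF uniformly_continuous_imp_continuous[OF cts_step_uniformly_continuous[OF cd]]])
       (auto intro!: continuous_intros)
  have fb: "\<bar>f u\<bar> \<le> 1" for u using cd by (auto simp: f_def cts_step_def field_simps)
  have fm: "(\<lambda>x. f (exp (- x))) \<in> borel_measurable borel"
    by (intro borel_measurable_continuous_onI continuous_on_compose2[OF fc]) (auto intro!: continuous_intros)
  have eq: "(\<integral>x. f (exp (- x)) \<partial>P) = (\<integral>x. f (exp (- x)) \<partial>Q)"
    by (rule laplace_cont[OF P Q P0 Q0 L fc fb])
  have "cdf P a = (\<integral>x. indicator {..a} x \<partial>P)"
  proof -
    interpret real_distribution P by fact
    show ?thesis by (simp add: cdf_def)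
  qed
  also have "\<dots> \<le> (\<integral>x. f (exp (- x)) \<partial>P)"
  proof -
    interpret real_distribution P by fact
    show ?thesis
      by (intro integral_mono integrable_const_bound[of _ 1])
         (use fm fb cd in \<open>auto simp: f_def cts_step_def c_def split: split_indicator\<close>)
  qed
  also have "\<dots> = (\<integral>x. f (exp (- x)) \<partial>Q)" by (rule eq)
  also have "\<dots> \<le> (\<integral>x. indicator {..b} x \<partial>Q)"
  proof -
    interpret real_distribution Q by fact
    show ?thesis
      by (intro integral_mono integrable_const_bound[of _ 1])
         (use fm fb cd in \<open>auto simp: f_def cts_step_def d_def split: split_indicator dest: me2\<close>)
  qed
  also have "\<dots> = cdf Q b"
  proof -
    interpret real_distribution Q by fact
    show ?thesis by (simp add: cdf_def)
  qed
  finally show ?thesis .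
qed

lemma laplace_cdf_le':
  assumes P: "real_distribution P" and Q: "real_distribution Q"
    and P0: "AE x in P. 0 \<le> x" and Q0: "AE x in Q. 0 \<le> x"
    and L: "\<And>n::nat. (\<integral>x. exp (- real n * x) \<partial>P) = (\<integral>x. exp (- real n * x) \<partial>Q)"
  shows "cdf P a \<le> cdf Q a"
proof -
  have "((cdf Q) \<longlongrightarrow> cdf Q a) (at_right a)"
    using finite_borel_measure.cdf_is_right_cont[OF real_distribution.finite_borel_measure_M[OF Q]]
    by (simp add: continuous_within)
  moreover have "\<forall>\<^sub>F b in at_right a. cdf P a \<le> cdf Q b"
    using eventually_at_right_less[of a] by eventually_elim (rule laplace_cdf_le[OF P Q P0 Q0 L])
  ultimately show ?thesis
    by (rule tendsto_lowerbound) simp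
qed

lemma laplace_unique:
  assumes P: "real_distribution P" and Q: "real_distribution Q"
    and P0: "AE x in P. 0 \<le> x" and Q0: "AE x in Q. 0 \<le> x"
    and L: "\<And>n::nat. (\<integral>x. exp (- real n * x) \<partial>P) = (\<integral>x. exp (- real n * x) \<partial>Q)"
  shows "P = Q"
proof (rule cdf_unique[OF P Q])
  show "cdf P = cdf Q"
  proof
    fix a
    show "cdf P a = cdf Q a"
      using laplace_cdf_le'[OF P Q P0 Q0 L, of a] laplace_cdf_le'[OF Q P Q0 P0 L[symmetric], of a]
      by simp
  qed
qed



lemma exp_tail:
  assumes s: "s > 0"
  shows "(\<integral>\<^sup>+t. ennreal (exp (- s * t)) * indicator {c..} t \<partial>lborel) = ennreal (exp (- s * c) / s)"
proof -
  have "(\<integral>\<^sup>+t. ennreal (exp (- s * t)) * indicator {c..} t \<partial>lborel) = ennreal (0 - (- exp (- s * c) / s))"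
  proof (rule nn_integral_FTC_atLeast)
    have "((\<lambda>t. - exp (- s * t) / s) \<longlongrightarrow> - 0 / s) at_top"
      by (intro tendsto_divide tendsto_minus filterlim_compose[OF exp_at_bot]
            filterlim_tendsto_neg_mult_at_bot[OF tendsto_const] filterlim_ident) (use s in auto)
    then show "((\<lambda>t. - exp (- s * t) / s) \<longlongrightarrow> 0) at_top" by simp
  qed (use s in \<open>auto intro!: derivative_eq_intros\<close>)
  then show ?thesis by simp
qed

lemma gamma_laplace:
  assumes a: "a > 0" and s: "s > 0"
  shows "(\<integral>\<^sup>+v. ennreal (indicator {0..} v * v powr (a - 1) * exp (- s * v)) \<partial>lborel)
     = ennreal (Gamma a / s powr a)"
proof -
  let ?g = "\<lambda>v::real. ennreal (indicator {0..} v * v powr (a - 1) * exp (- s * v))"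
  have "(\<integral>\<^sup>+v. ?g v \<partial>lborel) = \<bar>1/s\<bar> * (\<integral>\<^sup>+x. ?g (0 + (1/s) * x) \<partial>lborel)"
    by (rule nn_integral_real_affine) (use s in auto)
  also have "(\<integral>\<^sup>+x. ?g (0 + (1/s) * x) \<partial>lborel)
      = (\<integral>\<^sup>+x. ennreal (s powr (1 - a)) * ennreal (indicator {0..} x * x powr (a - 1) / exp x) \<partial>lborel)"
  proof (intro nn_integral_cong)
    fix x :: real
    show "?g (0 + (1/s) * x) = ennreal (s powr (1 - a)) * ennreal (indicator {0..} x * x powr (a - 1) / exp x)"
    proof (cases "x \<ge> 0")
      case True
      have "(x / s) powr (a - 1) = x powr (a - 1) / s powr (a - 1)"
        using True s by (simp add: powr_divide)
      also have "\<dots> = s powr (1 - a) * x powr (a - 1)"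
      proof -
        have "s powr (1 - a) * s powr (a - 1) = 1"
          using s by (simp add: powr_add[symmetric])
        then show ?thesis using s by (simp add: field_simps)
      qed
      finally show ?thesis
        using True s by (simp add: ennreal_mult[symmetric] exp_minus field_simps)
    next
      case False
      then show ?thesis using s by (simp add: zero_le_divide_iff)
    qed
  qed
  also have "\<dots> = ennreal (s powr (1 - a)) * ennreal (Gamma a)"
    by (subst nn_integral_cmult) (auto simp: Gamma_conv_nn_integral_real[OF a])
  also have "ennreal \<bar>1/s\<bar> * (ennreal (s powr (1 - a)) * ennreal (Gamma a)) = ennreal (Gamma a / s powr a)"
  proof -
    have "\<bar>1/s\<bar> * (s powr (1 - a) * Gamma a) = Gamma a / s powr a"
      using s by (simp add: powr_diff field_simps)
    then show ?thesis
      using s a Gamma_real_pos[OF a] by (simp add: ennreal_mult[symmetric])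
  qed
  finally show ?thesis by simp
qed



lemma part1_LF:
  fixes M :: "'a measure" and W :: "'a \<Rightarrow> real"
  assumes M: "prob_space M" and Wm: "W \<in> borel_measurable M" and W0: "AE x in M. 0 \<le> W x"
    and s: "s > 0"
  shows "(\<integral>\<^sup>+t. ennreal (exp (- s * t) * measure M {x \<in> space M. W x \<le> t}) * indicator {0<..} t \<partial>lborel)
     = ennreal ((\<integral>x. exp (- s * W x) \<partial>M) / s)"
proof -
  interpret M: prob_space M by fact
  interpret P: pair_sigma_finite lborel M
    by (intro pair_sigma_finite.intro lborel.sigma_finite_measure_axioms M.sigma_finite_measure_axioms)
  have [measurable]: "W \<in> borel_measurable M" by fact
  let ?f = "\<lambda>t x. ennreal (exp (- s * t) * indicator {0<..} t * (if W x \<le> t then 1 else 0))"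
  have fm: "case_prod ?f \<in> borel_measurable (lborel \<Otimes>\<^sub>M M)" by measurable
  have "(\<integral>\<^sup>+t. ennreal (exp (- s * t) * measure M {x \<in> space M. W x \<le> t}) * indicator {0<..} t \<partial>lborel)
      = (\<integral>\<^sup>+t. \<integral>\<^sup>+x. ?f t x \<partial>M \<partial>lborel)"
  proof (intro nn_integral_cong)
    fix t :: real
    have "(\<integral>\<^sup>+x. ?f t x \<partial>M) = (\<integral>\<^sup>+x. ennreal (exp (- s * t) * indicator {0<..} t) * indicator {x \<in> space M. W x \<le> t} x \<partial>M)"
      by (intro nn_integral_cong) (auto simp: indicator_def)
    also have "\<dots> = ennreal (exp (- s * t) * indicator {0<..} t) * emeasure M {x \<in> space M. W x \<le> t}"
      by (subst nn_integral_cmult_indicator) auto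
    also have "\<dots> = ennreal (exp (- s * t) * measure M {x \<in> space M. W x \<le> t}) * indicator {0<..} t"
      by (auto simp: M.emeasure_eq_measure ennreal_mult[symmetric] indicator_def)
    finally show "ennreal (exp (- s * t) * measure M {x \<in> space M. W x \<le> t}) * indicator {0<..} t = (\<integral>\<^sup>+x. ?f t x \<partial>M)"
      by simp
  qed
  also have "\<dots> = (\<integral>\<^sup>+x. \<integral>\<^sup>+t. ?f t x \<partial>lborel \<partial>M)"
    by (rule P.Fubini'[OF fm, symmetric])
  also have "\<dots> = (\<integral>\<^sup>+x. ennreal (exp (- s * W x) / s) \<partial>M)"
  proof (intro nn_integral_cong_AE)
    have inner: "(\<integral>\<^sup>+t. ?f t x \<partial>lborel) = ennreal (exp (- s * W x) / s)" if "0 \<le> W x" for x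
    proof -
      have "(\<integral>\<^sup>+t. ?f t x \<partial>lborel) = (\<integral>\<^sup>+t. ennreal (exp (- s * t)) * indicator {W x..} t \<partial>lborel)"
        by (intro nn_integral_cong_AE)
           (use AE_lborel_singleton[of 0] that in \<open>auto elim!: eventually_mono simp: indicator_def\<close>)
      also have "\<dots> = ennreal (exp (- s * W x) / s)" by (rule exp_tail[OF s])
      finally show ?thesis .
    qed
    show "AE x in M. (\<integral>\<^sup>+t. ?f t x \<partial>lborel) = ennreal (exp (- s * W x) / s)"
      by (rule eventually_mono[OF W0]) (rule inner)
  qed
  also have "\<dots> = ennreal (\<integral>x. exp (- s * W x) / s \<partial>M)"
  proof (rule nn_integral_eq_integral)
    show "integrable M (\<lambda>x. exp (- s * W x) / s)"
      by (rule M.integrable_const_bound[of _ "1 / s"])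
         (use W0 s in \<open>auto elim!: eventually_mono simp: divide_right_mono\<close>)
  qed (use s in auto)
  finally show ?thesis by simp
qed



lemma T_meas:
  fixes W :: "'a \<Rightarrow> real"
  assumes M: "prob_space M" and Wm: "W \<in> borel_measurable M"
  shows "(\<lambda>u. measure M {x \<in> space M. W x > u}) \<in> borel_measurable borel"
proof -
  interpret M: prob_space M by fact
  have [measurable]: "W \<in> borel_measurable M" by fact
  have "mono (\<lambda>u. - measure M {x \<in> space M. W x > u})"
    by (intro monoI le_imp_neg_le M.finite_measure_mono) auto
  then have "(\<lambda>u. - measure M {x \<in> space M. W x > u}) \<in> borel_measurable borel"
    by (rule borel_measurable_mono)
  then show ?thesis by simp
qed

lemma F_meas:
  fixes W :: "'a \<Rightarrow> real"
  assumes M: "prob_space M" and Wm: "W \<in> borel_measurable M"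
  shows "(\<lambda>u. measure M {x \<in> space M. W x \<le> u}) \<in> borel_measurable borel"
proof -
  interpret M: prob_space M by fact
  have [measurable]: "W \<in> borel_measurable M" by fact
  have "mono (\<lambda>u. measure M {x \<in> space M. W x \<le> u})"
    by (intro monoI M.finite_measure_mono) auto
  then show ?thesis
    by (rule borel_measurable_mono)
qed

lemma TF_sum:
  fixes W :: "'a \<Rightarrow> real"
  assumes M: "prob_space M" and Wm: "W \<in> borel_measurable M"
  shows "measure M {x \<in> space M. W x > u} = 1 - measure M {x \<in> space M. W x \<le> u}"
proof -
  interpret M: prob_space M by fact
  have [measurable]: "W \<in> borel_measurable M" by fact
  have "{x \<in> space M. W x > u} = space M - {x \<in> space M. W x \<le> u}" by auto
  then show ?thesis by (simp add: M.prob_compl)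
qed

lemma part1_LT:
  fixes M :: "'a measure" and W :: "'a \<Rightarrow> real"
  assumes M: "prob_space M" and Wm: "W \<in> borel_measurable M" and W0: "AE x in M. 0 \<le> W x"
    and s: "s > 0"
  shows "(\<integral>\<^sup>+t. ennreal (exp (- s * t) * measure M {x \<in> space M. W x > t}) * indicator {0<..} t \<partial>lborel)
     = ennreal ((1 - (\<integral>x. exp (- s * W x) \<partial>M)) / s)"
proof -
  let ?F = "\<lambda>u. measure M {x \<in> space M. W x \<le> u}"
  let ?T = "\<lambda>u. measure M {x \<in> space M. W x > u}"
  let ?phi = "\<integral>x. exp (- s * W x) \<partial>M"
  have [measurable]: "?F \<in> borel_measurable borel" "?T \<in> borel_measurable borel"
    using F_meas[OF M Wm] T_meas[OF M Wm] by auto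
  have T0: "0 \<le> ?T u" "0 \<le> ?F u" for u by auto
  have "(\<integral>\<^sup>+t. ennreal (exp (- s * t) * ?T t) * indicator {0<..} t \<partial>lborel)
      + (\<integral>\<^sup>+t. ennreal (exp (- s * t) * ?F t) * indicator {0<..} t \<partial>lborel)
      = (\<integral>\<^sup>+t. ennreal (exp (- s * t) * ?T t) * indicator {0<..} t
            + ennreal (exp (- s * t) * ?F t) * indicator {0<..} t \<partial>lborel)"
    by (rule nn_integral_add[symmetric]) auto
  also have "\<dots> = (\<integral>\<^sup>+t. ennreal (exp (- s * t)) * indicator {0..} t \<partial>lborel)"
  proof (intro nn_integral_cong_AE)
    show "AE t in lborel. ennreal (exp (- s * t) * ?T t) * indicator {0<..} t
            + ennreal (exp (- s * t) * ?F t) * indicator {0<..} t = ennreal (exp (- s * t)) * indicator {0..} t"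
      using AE_lborel_singleton[of 0]
    proof (rule eventually_mono)
      fix t :: real assume "t \<noteq> 0"
      have "exp (- s * t) * ?T t + exp (- s * t) * ?F t = exp (- s * t)"
        using TF_sum[OF M Wm, of t] by (simp add: distrib_left[symmetric])
      then show "ennreal (exp (- s * t) * ?T t) * indicator {0<..} t
            + ennreal (exp (- s * t) * ?F t) * indicator {0<..} t = ennreal (exp (- s * t)) * indicator {0..} t"
        using \<open>t \<noteq> 0\<close> T0[of t]
        by (auto simp: indicator_def ennreal_plus[symmetric] simp del: ennreal_plus)
    qed
  qed
  also have "\<dots> = ennreal (1 / s)" using exp_tail[OF s, of 0] by simp
  finally have eq: "(\<integral>\<^sup>+t. ennreal (exp (- s * t) * ?T t) * indicator {0<..} t \<partial>lborel) + ennreal (?phi / s) = ennreal (1 / s)"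
    using part1_LF[OF M Wm W0 s] by simp
  have phi0: "0 \<le> ?phi" by (intro integral_nonneg_AE) auto
  have "(\<integral>\<^sup>+t. ennreal (exp (- s * t) * ?T t) * indicator {0<..} t \<partial>lborel) = ennreal (1 / s) - ennreal (?phi / s)"
    using eq[symmetric] by (simp add: ennreal_add_diff_cancel_right)
  also have "\<dots> = ennreal ((1 - ?phi) / s)"
    using phi0 s by (simp add: ennreal_minus diff_divide_distrib)
  finally show ?thesis .
qed



lemma conv_laplace:
  fixes T :: "real \<Rightarrow> real"
  assumes Tm: "T \<in> borel_measurable borel" and T0: "\<And>u. 0 \<le> T u"
    and a: "0 < a" and s: "0 < s"
  shows "(\<integral>\<^sup>+t. ennreal (exp (- s * t)) * indicator {0<..} t *
            (\<integral>\<^sup>+v. ennreal (T (t - v) * v powr (a - 1)) * indicator {0<..<t} v \<partial>lborel) \<partial>lborel)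
       = ennreal (Gamma a / s powr a) * (\<integral>\<^sup>+u. ennreal (exp (- s * u) * T u) * indicator {0<..} u \<partial>lborel)"
proof -
  have [measurable]: "T \<in> borel_measurable borel" by fact
  let ?LT = "\<integral>\<^sup>+u. ennreal (exp (- s * u) * T u) * indicator {0<..} u \<partial>lborel"
  let ?h = "\<lambda>t v. ennreal (exp (- s * t)) * ennreal (T (t - v) * v powr (a - 1)) * indicator {0<..} v * (if v < t then 1 else 0)"
  have hm: "case_prod ?h \<in> borel_measurable (lborel \<Otimes>\<^sub>M lborel)" by measurable
  have "(\<integral>\<^sup>+t. ennreal (exp (- s * t)) * indicator {0<..} t *
            (\<integral>\<^sup>+v. ennreal (T (t - v) * v powr (a - 1)) * indicator {0<..<t} v \<partial>lborel) \<partial>lborel)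
      = (\<integral>\<^sup>+t. \<integral>\<^sup>+v. ?h t v \<partial>lborel \<partial>lborel)"
  proof (intro nn_integral_cong)
    fix t :: real
    have "ennreal (exp (- s * t)) * indicator {0<..} t *
            (\<integral>\<^sup>+v. ennreal (T (t - v) * v powr (a - 1)) * indicator {0<..<t} v \<partial>lborel)
        = (\<integral>\<^sup>+v. ennreal (exp (- s * t)) * indicator {0<..} t * (ennreal (T (t - v) * v powr (a - 1)) * indicator {0<..<t} v) \<partial>lborel)"
      by (rule nn_integral_cmult[symmetric]) measurable
    also have "\<dots> = (\<integral>\<^sup>+v. ?h t v \<partial>lborel)"
      by (intro nn_integral_cong) (auto simp: indicator_def)
    finally show "ennreal (exp (- s * t)) * indicator {0<..} t *
            (\<integral>\<^sup>+v. ennreal (T (t - v) * v powr (a - 1)) * indicator {0<..<t} v \<partial>lborel)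
        = (\<integral>\<^sup>+v. ?h t v \<partial>lborel)" .
  qed
  also have "\<dots> = (\<integral>\<^sup>+v. \<integral>\<^sup>+t. ?h t v \<partial>lborel \<partial>lborel)"
    by (rule lborel_pair.Fubini'[OF hm, symmetric])
  also have "\<dots> = (\<integral>\<^sup>+v. ennreal (indicator {0..} v * v powr (a - 1) * exp (- s * v)) * ?LT \<partial>lborel)"
  proof (intro nn_integral_cong_AE)
    have inner: "(\<integral>\<^sup>+t. ?h t v \<partial>lborel) = ennreal (indicator {0..} v * v powr (a - 1) * exp (- s * v)) * ?LT"
      if v: "v \<noteq> 0" for v :: real
    proof (cases "v > 0")
      case False
      then show ?thesis using v by (simp add: indicator_def)
    next
      case True
      let ?g = "\<lambda>t. ennreal (exp (- s * t) * T (t - v)) * indicator {v<..} t"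
      have "(\<integral>\<^sup>+t. ?h t v \<partial>lborel) = (\<integral>\<^sup>+t. ennreal (v powr (a - 1)) * ?g t \<partial>lborel)"
        using True T0 by (intro nn_integral_cong) (auto simp: indicator_def ennreal_mult[symmetric] mult_ac)
      also have "\<dots> = ennreal (v powr (a - 1)) * (\<integral>\<^sup>+t. ?g t \<partial>lborel)"
        by (rule nn_integral_cmult) measurable
      also have "(\<integral>\<^sup>+t. ?g t \<partial>lborel) = (\<integral>\<^sup>+u. ?g (v + 1 * u) \<partial>lborel)"
        using nn_integral_real_affine[of ?g 1 v] by simp
      also have "\<dots> = (\<integral>\<^sup>+u. ennreal (exp (- s * v)) * (ennreal (exp (- s * u) * T u) * indicator {0<..} u) \<partial>lborel)"
        using T0 by (intro nn_integral_cong) (auto simp: indicator_def ennreal_mult[symmetric] algebra_simps exp_add[symmetric])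
      also have "\<dots> = ennreal (exp (- s * v)) * ?LT"
        by (rule nn_integral_cmult) measurable
      finally show ?thesis
        using True by (simp add: ennreal_mult mult_ac)
    qed
    show "AE v in lborel. (\<integral>\<^sup>+t. ?h t v \<partial>lborel) = ennreal (indicator {0..} v * v powr (a - 1) * exp (- s * v)) * ?LT"
      by (rule eventually_mono[OF AE_lborel_singleton[of 0]]) (rule inner)
  qed
  also have "\<dots> = (\<integral>\<^sup>+v. ennreal (indicator {0..} v * v powr (a - 1) * exp (- s * v)) \<partial>lborel) * ?LT"
    by (rule nn_integral_multc) measurable
  also have "\<dots> = ennreal (Gamma a / s powr a) * ?LT"
    using gamma_laplace[OF a s] by simp
  finally show ?thesis .
qed



lemma part1:
  fixes M :: "'a measure" and W :: "'a \<Rightarrow> real"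
  assumes M: "prob_space M" and Wm: "W \<in> borel_measurable M" and W0: "AE x in M. 0 \<le> W x"
    and a: "0 < a"
    and eq: "\<And>t. t > 0 \<Longrightarrow> measure M {x \<in> space M. W x \<le> t} =
        (LINT v:{0<..<t}|lborel. measure M {x \<in> space M. W x > t - v} * v powr (a - 1))"
    and s: "s > 0"
  shows "(\<integral>x. exp (- s * W x) \<partial>M) = 1 / (1 + (1 / Gamma a) * s powr a)"
proof -
  interpret M: prob_space M by fact
  have Wm'[measurable]: "W \<in> borel_measurable M" by fact
  let ?F = "\<lambda>u. measure M {x \<in> space M. W x \<le> u}"
  let ?T = "\<lambda>u. measure M {x \<in> space M. W x > u}"
  let ?phi = "\<integral>x. exp (- s * W x) \<partial>M"
  have [measurable]: "?F \<in> borel_measurable borel" "?T \<in> borel_measurable borel"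
    using F_meas[OF M Wm] T_meas[OF M Wm] by auto
  have T1: "?T u \<le> 1" for u by simp
  have Fnn: "ennreal (?F t) = (\<integral>\<^sup>+v. ennreal (?T (t - v) * v powr (a - 1)) * indicator {0<..<t} v \<partial>lborel)"
    if t: "t > 0" for t
  proof -
    let ?g = "\<lambda>v. indicator {0<..<t} v *\<^sub>R (?T (t - v) * v powr (a - 1))"
    have gm: "?g \<in> borel_measurable lborel" by measurable
    have g0: "0 \<le> ?g v" for v by (auto simp: indicator_def)
    have nn: "(\<integral>\<^sup>+v. ennreal (?g v) \<partial>lborel) = (\<integral>\<^sup>+v. ennreal (?T (t - v) * v powr (a - 1)) * indicator {0<..<t} v \<partial>lborel)"
      by (intro nn_integral_cong) (auto simp: indicator_def)
    have "(\<integral>\<^sup>+v. ennreal (?g v) \<partial>lborel)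
        \<le> (\<integral>\<^sup>+v. ennreal (exp t) * ennreal (indicator {0..} v * v powr (a - 1) * exp (- 1 * v)) \<partial>lborel)"
    proof (intro nn_integral_mono)
      fix v :: real
      show "ennreal (?g v) \<le> ennreal (exp t) * ennreal (indicator {0..} v * v powr (a - 1) * exp (- 1 * v))"
      proof (cases "v \<in> {0<..<t}")
        case True
        have "?T (t - v) * v powr (a - 1) \<le> 1 * v powr (a - 1)"
          by (intro mult_right_mono T1) auto
        also have "\<dots> \<le> exp t * (v powr (a - 1) * exp (- v))"
        proof -
          have "1 \<le> exp t * exp (- v)" using True by (simp add: exp_add[symmetric])
          from mult_right_mono[OF this, of "v powr (a - 1)"] show ?thesis by (simp add: mult_ac)
        qed
        finally show ?thesis
          using True by (simp add: ennreal_mult[symmetric] indicator_def)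
      qed (auto simp: indicator_def)
    qed
    also have "\<dots> = ennreal (exp t) * ennreal (Gamma a / 1 powr a)"
      using gamma_laplace[OF a, of 1] by (subst nn_integral_cmult) auto
    also have "\<dots> < \<infinity>" by (simp add: ennreal_mult_less_top)
    finally have "integrable lborel ?g"
      by (intro integrableI_nonneg gm) (auto simp: g0)
    then have "(\<integral>\<^sup>+v. ennreal (?g v) \<partial>lborel) = ennreal (integral\<^sup>L lborel ?g)"
      by (intro nn_integral_eq_integral) (auto simp: g0)
    then show ?thesis
      using eq[OF t] nn by (simp add: set_lebesgue_integral_def)
  qed
  have "ennreal (?phi / s) = (\<integral>\<^sup>+t. ennreal (exp (- s * t) * ?F t) * indicator {0<..} t \<partial>lborel)"
    using part1_LF[OF M Wm W0 s] by simp
  also have "\<dots> = (\<integral>\<^sup>+t. ennreal (exp (- s * t)) * indicator {0<..} t *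
            (\<integral>\<^sup>+v. ennreal (?T (t - v) * v powr (a - 1)) * indicator {0<..<t} v \<partial>lborel) \<partial>lborel)"
  proof (intro nn_integral_cong)
    fix t :: real
    show "ennreal (exp (- s * t) * ?F t) * indicator {0<..} t = ennreal (exp (- s * t)) * indicator {0<..} t *
            (\<integral>\<^sup>+v. ennreal (?T (t - v) * v powr (a - 1)) * indicator {0<..<t} v \<partial>lborel)"
    proof (cases "t > 0")
      case True
      show ?thesis
        by (subst Fnn[OF True, symmetric]) (use True in \<open>simp add: ennreal_mult\<close>)
    qed (simp add: indicator_def)
  qed
  also have "\<dots> = ennreal (Gamma a / s powr a) * (\<integral>\<^sup>+u. ennreal (exp (- s * u) * ?T u) * indicator {0<..} u \<partial>lborel)"
    by (rule conv_laplace) (use a s in auto)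
  also have "\<dots> = ennreal (Gamma a / s powr a) * ennreal ((1 - ?phi) / s)"
    using part1_LT[OF M Wm W0 s] by simp
  also have "\<dots> = ennreal (Gamma a / s powr a * ((1 - ?phi) / s))"
  proof -
    have "\<bar>?phi\<bar> \<le> 1"
      by (rule prob_int_abs_bound[OF M]) (use W0 s in \<open>auto elim!: eventually_mono\<close>)
    then show ?thesis using Gamma_real_pos[OF a] s
      by (intro ennreal_mult[symmetric]) auto
  qed
  finally have e1: "ennreal (?phi / s) = ennreal (Gamma a / s powr a * ((1 - ?phi) / s))" .
  have phi0: "0 \<le> ?phi" by (intro integral_nonneg_AE) auto
  have "\<bar>?phi\<bar> \<le> 1"
    by (rule prob_int_abs_bound[OF M]) (use W0 s in \<open>auto elim!: eventually_mono\<close>)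
  then have phi1: "?phi \<le> 1" by simp
  have G: "Gamma a / s powr a > 0" using Gamma_real_pos[OF a] s by simp
  have nn2: "0 \<le> Gamma a / s powr a * ((1 - ?phi) / s)"
    using phi1 s G Gamma_real_pos[OF a] by (intro mult_nonneg_nonneg divide_nonneg_pos) auto
  have e2: "?phi / s = Gamma a / s powr a * ((1 - ?phi) / s)"
    using e1 phi0 s nn2 by (subst (asm) ennreal_inj) auto
  define G' where "G' = Gamma a / s powr a"
  have e3: "?phi = G' * (1 - ?phi)" using e2 s by (simp add: G'_def field_simps)
  have alg: "p = g / (1 + g)" if "g > 0" "p = g * (1 - p)" for p g :: real
  proof -
    have "p * (1 + g) = g" using that(2) by (simp add: algebra_simps)
    then show ?thesis using that(1) by (simp add: field_simps)
  qed
  have "?phi = G' / (1 + G')" using alg[OF _ e3] G by (simp add: G'_def)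
  also have "\<dots> = 1 / (1 + (1 / Gamma a) * s powr a)"
    using Gamma_real_pos[OF a] s by (simp add: G'_def field_simps)
  finally show ?thesis .
qed



lemma part2_laplace:
  fixes N :: "'b measure" and E G :: "'b \<Rightarrow> real"
  assumes N: "prob_space N" and Em: "E \<in> borel_measurable N" and Gm: "G \<in> borel_measurable N"
    and ind: "prob_space.indep_var N borel E borel G"
    and Etail: "\<forall>t\<ge>0. measure N {x \<in> space N. E x > t} = exp (- t)"
    and G0: "AE x in N. 0 \<le> G x"
    and GL: "\<forall>s>0. (\<integral>x. exp (- s * G x) \<partial>N) = exp (- (s powr (1 / \<beta>)))"
    and b: "\<beta> > 0" and c: "c > 0" and s: "s > 0"
  shows "(\<integral>x. exp (- s * (c powr \<beta> * E x powr \<beta> * G x)) \<partial>N) = 1 / (1 + c * s powr (1 / \<beta>))"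
proof -
  interpret N: prob_space N by fact
  have [measurable]: "E \<in> borel_measurable N" "G \<in> borel_measurable N" by fact+
  define k where "k = c * s powr (1 / \<beta>)"
  have k: "k > 0" using c s by (simp add: k_def)
  have Edist: "distributed N lborel E (exponential_density 1)"
  proof (subst N.exponential_distributed_iff)
    show "E \<in> borel_measurable N \<and> (\<forall>a\<ge>0. \<P>(x in N. E x \<le> a) = 1 - exp (- a * 1))"
      using Etail TF_sum[OF N Em] by auto
  qed simp
  have "\<P>(x in N. E x > 0) = 1" using Etail by auto
  then have Epos: "AE x in N. E x > 0"
    using N.AE_prob_1[of "{x \<in> space N. E x > 0}"] by (auto elim!: eventually_mono)
  let ?DE = "distr N borel E" and ?DG = "distr N borel G"
  interpret DG: prob_space ?DG by (rule N.prob_space_distr) simp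
  let ?h = "\<lambda>z::real \<times> real. ennreal (exp (- s * (c powr \<beta> * fst z powr \<beta> * snd z)))"
  have hm: "?h \<in> borel_measurable (borel \<Otimes>\<^sub>M borel)" by measurable
  have joint: "?DE \<Otimes>\<^sub>M ?DG = distr N (borel \<Otimes>\<^sub>M borel) (\<lambda>x. (E x, G x))"
    using ind N.indep_var_distribution_eq by blast
  have "(\<integral>\<^sup>+x. ennreal (exp (- s * (c powr \<beta> * E x powr \<beta> * G x))) \<partial>N)
      = (\<integral>\<^sup>+z. ?h z \<partial>distr N (borel \<Otimes>\<^sub>M borel) (\<lambda>x. (E x, G x)))"
    by (subst nn_integral_distr) (auto intro: hm)
  also have "\<dots> = (\<integral>\<^sup>+z. ?h z \<partial>(?DE \<Otimes>\<^sub>M ?DG))" by (simp add: joint)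
  also have "\<dots> = (\<integral>\<^sup>+e. \<integral>\<^sup>+g. ?h (e, g) \<partial>?DG \<partial>?DE)"
    by (rule DG.nn_integral_fst[symmetric]) (use hm in simp)
  also have "\<dots> = (\<integral>\<^sup>+e. ennreal (exp (- k * e)) \<partial>?DE)"
  proof (rule nn_integral_cong_AE)
    have inner: "(\<integral>\<^sup>+g. ?h (e, g) \<partial>?DG) = ennreal (exp (- k * e))" if e: "e > 0" for e
    proof -
      define s' where "s' = s * c powr \<beta> * e powr \<beta>"
      have s': "s' > 0" using s c e by (simp add: s'_def)
      have "(\<integral>\<^sup>+g. ?h (e, g) \<partial>?DG) = (\<integral>\<^sup>+x. ennreal (exp (- s' * G x)) \<partial>N)"
        by (subst nn_integral_distr) (auto simp: s'_def mult_ac)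
      also have "\<dots> = ennreal (\<integral>x. exp (- s' * G x) \<partial>N)"
      proof (rule nn_integral_eq_integral)
        show "integrable N (\<lambda>x. exp (- s' * G x))"
          by (rule N.integrable_const_bound[of _ 1]) (use G0 s' in \<open>auto elim!: eventually_mono\<close>)
      qed auto
      also have "\<dots> = ennreal (exp (- (s' powr (1 / \<beta>))))" using GL s' by simp
      also have "s' powr (1 / \<beta>) = k * e"
      proof -
        have "s' powr (1 / \<beta>) = s powr (1 / \<beta>) * (c powr \<beta>) powr (1 / \<beta>) * (e powr \<beta>) powr (1 / \<beta>)"
          using s c e by (simp add: s'_def powr_mult)
        also have "\<dots> = s powr (1 / \<beta>) * c * e"
          using b c e by (simp add: powr_powr)
        finally show ?thesis by (simp add: k_def mult_ac)
      qed
      finally show ?thesis by simp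
    qed
    have "AE e in ?DE. e > 0"
      by (subst AE_distr_iff) (use Epos in auto)
    then show "AE e in ?DE. (\<integral>\<^sup>+g. ?h (e, g) \<partial>?DG) = ennreal (exp (- k * e))"
      by (rule eventually_mono) (rule inner)
  qed
  also have "\<dots> = (\<integral>\<^sup>+x. ennreal (exp (- k * E x)) \<partial>N)"
    by (subst nn_integral_distr) auto
  also have "\<dots> = (\<integral>\<^sup>+x. ennreal (exponential_density 1 x) * ennreal (exp (- k * x)) \<partial>lborel)"
    by (rule distributed_nn_integral[OF Edist, symmetric]) simp
  also have "\<dots> = (\<integral>\<^sup>+x. ennreal (exp (- (1 + k) * x)) * indicator {0..} x \<partial>lborel)"
    by (intro nn_integral_cong)
       (auto simp: exponential_density_def indicator_def ennreal_mult[symmetric] exp_add[symmetric] algebra_simps)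
  also have "\<dots> = ennreal (1 / (1 + k))"
    using exp_tail[of "1 + k" 0] k by simp
  finally have nn: "(\<integral>\<^sup>+x. ennreal (exp (- s * (c powr \<beta> * E x powr \<beta> * G x))) \<partial>N) = ennreal (1 / (1 + k))" .
  have "(\<integral>x. exp (- s * (c powr \<beta> * E x powr \<beta> * G x)) \<partial>N)
      = enn2real (\<integral>\<^sup>+x. ennreal (exp (- s * (c powr \<beta> * E x powr \<beta> * G x))) \<partial>N)"
    by (rule integral_eq_nn_integral) auto
  also have "\<dots> = 1 / (1 + k)" using nn k by simp
  finally show ?thesis by (simp add: k_def)
qed



theorem lemma3p9:
  fixes M :: "'a measure" and W :: "'a \<Rightarrow> real" and \<alpha> \<beta> :: real
  assumes alpha: "1 < \<alpha>" "\<alpha> \<le> 2"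
    and beta: "1 / \<alpha> + 1 / \<beta> = 1"
    and M: "prob_space M"
    and W_meas: "W \<in> borel_measurable M"
    and W_nonneg: "AE x in M. 0 \<le> W x"
    and W_eq: "\<And>t. t > 0 \<Longrightarrow>
        measure M {x \<in> space M. W x \<le> t} =
        (LINT v:{0<..<t}|lborel. measure M {x \<in> space M. W x > t - v} / v powr (1 / \<alpha>))"
  shows "(\<forall>s>0. (\<integral>x. exp (- s * W x) \<partial>M)
            = 1 / (1 + (1 / Gamma (1 / \<beta>)) * s powr (1 / \<beta>)))
      \<and> (\<forall>(N :: 'b measure) E G.
          prob_space N \<longrightarrow>
          E \<in> borel_measurable N \<longrightarrow> G \<in> borel_measurable N \<longrightarrow>
          prob_space.indep_var N borel E borel G \<longrightarrow>
          (\<forall>t\<ge>0. measure N {x \<in> space N. E x > t} = exp (- t)) \<longrightarrow>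
          (AE x in N. 0 \<le> G x) \<longrightarrow>
          (\<forall>s>0. (\<integral>x. exp (- s * G x) \<partial>N) = exp (- (s powr (1 / \<beta>)))) \<longrightarrow>
          distr M borel W =
          distr N borel (\<lambda>x. (1 / Gamma (1 / \<beta>)) powr \<beta> * E x powr \<beta> * G x))"
proof -
  interpret M: prob_space M by fact
  have [measurable]: "W \<in> borel_measurable M" by fact
  define a where "a = 1 / \<beta>"
  have a_eq: "a = 1 - 1 / \<alpha>" using beta by (simp add: a_def)
  have a0: "a > 0" using alpha by (simp add: a_eq)
  have b0: "\<beta> > 0" using a0 by (simp add: a_def)
  have am1: "a - 1 = - (1 / \<alpha>)" by (simp add: a_eq)
  have eq': "measure M {x \<in> space M. W x \<le> t} =
        (LINT v:{0<..<t}|lborel. measure M {x \<in> space M. W x > t - v} * v powr (a - 1))" if t: "t > 0" for t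
  proof -
    have "(LINT v:{0<..<t}|lborel. measure M {x \<in> space M. W x > t - v} / v powr (1 / \<alpha>))
        = (LINT v:{0<..<t}|lborel. measure M {x \<in> space M. W x > t - v} * v powr (a - 1))"
      by (rule set_lebesgue_integral_cong) (auto simp: am1 powr_minus_divide)
    then show ?thesis using W_eq[OF t] by simp
  qed
  have P1: "(\<integral>x. exp (- s * W x) \<partial>M) = 1 / (1 + (1 / Gamma a) * s powr a)" if s: "s > 0" for s
    by (rule part1[OF M W_meas W_nonneg a0 eq' s])
  show ?thesis
  proof (intro conjI allI impI)
    show "(\<integral>x. exp (- s * W x) \<partial>M) = 1 / (1 + (1 / Gamma (1 / \<beta>)) * s powr (1 / \<beta>))" if "s > 0" for s
      using P1[OF that] by (simp add: a_def)
  next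
    fix N :: "'b measure" and E G :: "'b \<Rightarrow> real"
    assume N: "prob_space N" and Em: "E \<in> borel_measurable N" and Gm: "G \<in> borel_measurable N"
      and ind: "prob_space.indep_var N borel E borel G"
      and Etail: "\<forall>t\<ge>0. measure N {x \<in> space N. E x > t} = exp (- t)"
      and G0: "AE x in N. 0 \<le> G x"
      and GL: "\<forall>s>0. (\<integral>x. exp (- s * G x) \<partial>N) = exp (- (s powr (1 / \<beta>)))"
    interpret N: prob_space N by fact
    have [measurable]: "E \<in> borel_measurable N" "G \<in> borel_measurable N" by fact+
    define c where "c = 1 / Gamma (1 / \<beta>)"
    have c0: "c > 0" using Gamma_real_pos[OF a0] by (simp add: c_def a_def)
    let ?Y = "\<lambda>x. c powr \<beta> * E x powr \<beta> * G x"
    have "distr M borel W = distr N borel ?Y"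
    proof (rule laplace_unique)
      show "real_distribution (distr M borel W)" by (rule M.real_distribution_distr) simp
      show "real_distribution (distr N borel ?Y)" by (rule N.real_distribution_distr) simp
      show "AE x in distr M borel W. 0 \<le> x"
        by (subst AE_distr_iff) (use W_nonneg in auto)
      show "AE x in distr N borel ?Y. 0 \<le> x"
        by (subst AE_distr_iff) (use G0 in \<open>auto elim!: eventually_mono\<close>)
      fix n :: nat
      have l: "(\<integral>x. exp (- real n * x) \<partial>distr M borel W) = (\<integral>x. exp (- real n * W x) \<partial>M)"
        by (rule integral_distr) auto
      have r: "(\<integral>x. exp (- real n * x) \<partial>distr N borel ?Y) = (\<integral>x. exp (- real n * ?Y x) \<partial>N)"
        by (rule integral_distr) auto
      show "(\<integral>x. exp (- real n * x) \<partial>distr M borel W) = (\<integral>x. exp (- real n * x) \<partial>distr N borel ?Y)"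
      proof (cases "n = 0")
        case True
        then show ?thesis using l r by (simp add: M.prob_space N.prob_space)
      next
        case False
        then have n: "real n > 0" by simp
        have "(\<integral>x. exp (- real n * ?Y x) \<partial>N) = 1 / (1 + c * real n powr (1 / \<beta>))"
          by (rule part2_laplace[OF N Em Gm ind Etail G0 GL b0 c0 n])
        also have "\<dots> = (\<integral>x. exp (- real n * W x) \<partial>M)"
          using P1[OF n] by (simp add: c_def a_def)
        finally show ?thesis using l r by simp
      qed
    qed
    then show "distr M borel W = distr N borel (\<lambda>x. (1 / Gamma (1 / \<beta>)) powr \<beta> * E x powr \<beta> * G x)"
      by (simp add: c_def)
  qed
qed


end
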